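(* Let $\mathbf{x}=(\mathbf{x}_1,\mathbf{x}_2,\mathbf{x}_3)$ have i.i.d. Bernoulli$(0.5)$ coordinates, and let $\mathbf{y}$ be distributed as follows: if $\mathbf{x}_3=1$, $\mathbf{y}=\mathbf{x}_1$ with probability $0.9$ and $\mathbf{y}=1-\mathbf{x}_1$ otherwise; if $\mathbf{x}_3=0$, $\mathbf{y}=\mathbf{x}_2$ with probability $0.9$ and $\mathbf{y}=1-\mathbf{x}_2$ otherwise. Let $e_{\mathrm{encode}}(\mathbf{x})=\xi_1=[1,0,0]$ if $\mathbf{x}_3=1$ and $e_{\mathrm{encode}}(\mathbf{x})=\xi_2=[0,1,0]$ otherwise. Then ROAR and FRESH both assign their respective optimal scores to $e_{\mathrm{encode}}$; that is, $\mathbf{y}$ is independent of $\mathbf{x}_{-e_{\mathrm{encode}}(\mathbf{x})}$, and $q(\mathbf{y}\mid \mathrm{val}(\mathbf{x}_{e_{\mathrm{encode}}(\mathbf{x})}))=q(\mathbf{y}\mid\mathbf{x})$ almost surely.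
   Context: An explanation is a map $e:\{0,1\}^3\to\{0,1\}^3$ selecting coordinates; the explanation $\mathbf{x}_{e(\mathbf{x})}=(\mathbf{v},\mathbf{a})$ consists of the selection $\mathbf{v}=e(\mathbf{x})$ and the values $\mathbf{a}$ of the selected coordinates. $\mathbf{x}_{-e(\mathbf{x})}$ denotes the pair of the complementary mask $\mathbf{1}-e(\mathbf{x})$ and the values of the unselected coordinates. ROAR scores an explanation by how poorly $\mathbf{x}_{-e(\mathbf{x})}$ predicts $\mathbf{y}$, and assigns its optimal score exactly when $\mathbf{y}$ is independent of $\mathbf{x}_{-e(\mathbf{x})}$. $\mathrm{val}(\mathbf{x}_{e(\mathbf{x})})$ is the vector in which the selected values $\mathbf{a}$ are placed in order in the first $\sum_i\mathbf{v}_i$ positions and the remaining positions are filled with a padding token (so the positions of the selected coordinates are dropped). FRESH scores an explanation by how well $\mathrm{val}(\mathbf{x}_{e(\mathbf{x})})$ predicts $\mathbf{y}$, and assigns its optimal score when this prediction is as good as that of $q(\mathbf{y}\mid\mathbf{x})$, i.e. $q(\mathbf{y}\mid\mathrm{val}(\mathbf{x}_{e(\mathbf{x})}))=q(\mathbf{y}\mid\mathbf{x})$. *)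

theory Defs
  imports "HOL-Probability.Probability"
begin

text \<open>Binary values are encoded as bool (True = 1, False = 0).
  Inputs and selection masks live in {0,1}^3, rendered as bool triples.\<close>

type_synonym bvec = "bool \<times> bool \<times> bool"

definition vlist :: "bvec \<Rightarrow> bool list" where
  "vlist v = (case v of (a, b, c) \<Rightarrow> [a, b, c])"

definition mask_compl :: "bvec \<Rightarrow> bvec" where
  "mask_compl v = (case v of (a, b, c) \<Rightarrow> (\<not> a, \<not> b, \<not> c))"

definition selected :: "bvec \<Rightarrow> bvec \<Rightarrow> bool list" where
  "selected v x = map snd (filter fst (zip (vlist v) (vlist x)))"

text \<open>x_{e(x)} = (e(x), selected values)\<close>
definition expl_of :: "(bvec \<Rightarrow> bvec) \<Rightarrow> bvec \<Rightarrow> bvec \<times> bool list" where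
  "expl_of e x = (e x, selected (e x) x)"

text \<open>x_{-e(x)} = (1 - e(x), values of unselected coordinates)\<close>
definition removed :: "(bvec \<Rightarrow> bvec) \<Rightarrow> bvec \<Rightarrow> bvec \<times> bool list" where
  "removed e x = (mask_compl (e x), selected (mask_compl (e x)) x)"

text \<open>val(x_{e(x)}): selected values in the first positions, padding token (None) after.\<close>
definition val_expl :: "(bvec \<Rightarrow> bvec) \<Rightarrow> bvec \<Rightarrow> bool option list" where
  "val_expl e x = (let s = selected (e x) x in map Some s @ replicate (3 - length s) None)"

definition indep_pmf :: "'w pmf \<Rightarrow> ('w \<Rightarrow> 'a) \<Rightarrow> ('w \<Rightarrow> 'b) \<Rightarrow> bool" where
  "indep_pmf D X Y \<longleftrightarrow> (\<forall>a b. measure_pmf.prob D {w. X w = a \<and> Y w = b}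
      = measure_pmf.prob D {w. X w = a} * measure_pmf.prob D {w. Y w = b})"

definition cond_prob :: "'w pmf \<Rightarrow> ('w \<Rightarrow> 'b) \<Rightarrow> 'b \<Rightarrow> ('w \<Rightarrow> 'c) \<Rightarrow> 'c \<Rightarrow> real" where
  "cond_prob D Y b Z z = measure_pmf.prob D {w. Y w = b \<and> Z w = z} / measure_pmf.prob D {w. Z w = z}"

definition ydist :: "bvec \<Rightarrow> bool pmf" where
  "ydist x = (case x of (x1, x2, x3) \<Rightarrow>
     (let t = (if x3 then x1 else x2) in map_pmf (\<lambda>keep. if keep then t else \<not> t) (bernoulli_pmf (9/10))))"

definition data :: "(bvec \<times> bool) pmf" where
  "data = do { x \<leftarrow> pair_pmf (bernoulli_pmf (1/2)) (pair_pmf (bernoulli_pmf (1/2)) (bernoulli_pmf (1/2)));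
               y \<leftarrow> ydist x; return_pmf (x, y) }"

definition e_encode :: "bvec \<Rightarrow> bvec" where
  "e_encode x = (case x of (x1, x2, x3) \<Rightarrow> if x3 then (True, False, False) else (False, True, False))"

definition roar_optimal :: "(bvec \<times> bool) pmf \<Rightarrow> (bvec \<Rightarrow> bvec) \<Rightarrow> bool" where
  "roar_optimal D e \<longleftrightarrow> indep_pmf D snd (\<lambda>(x, y). removed e x)"

definition fresh_optimal :: "(bvec \<times> bool) pmf \<Rightarrow> (bvec \<Rightarrow> bvec) \<Rightarrow> bool" where
  "fresh_optimal D e \<longleftrightarrow> (AE w in measure_pmf D. \<forall>b.
      cond_prob D snd b (\<lambda>(x, y). val_expl e x) (val_expl e (fst w))
    = cond_prob D snd b fst (fst w))"

end

theory Submission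
  imports Defs
begin

definition tt :: "bvec \<Rightarrow> bool" where "tt x = (case x of (x1,x2,x3) \<Rightarrow> if x3 then x1 else x2)"
definition gg :: "bvec \<times> bool \<Rightarrow> bvec \<times> bool" where "gg z = (fst z, if snd z then tt (fst z) else \<not> tt (fst z))"
lemma data_alt: "data = map_pmf gg (pair_pmf (pair_pmf (bernoulli_pmf (1/2)) (pair_pmf (bernoulli_pmf (1/2)) (bernoulli_pmf (1/2)))) (bernoulli_pmf (9/10)))"
  unfolding data_def ydist_def gg_def tt_def map_pmf_def pair_pmf_def
  apply (simp add: bind_assoc_pmf bind_return_pmf Let_def)
  apply (intro bind_pmf_cong refl)
  apply auto
  done
lemma inj_gg: "inj gg" unfolding inj_def gg_def by auto
lemma pmf_data: "pmf data (x, y) = (if y = tt x then 9/80 else 1/80)"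
proof -
  have "(x,y) = gg (x, y = tt x)" unfolding gg_def by auto
  hence "pmf data (x,y) = pmf (pair_pmf (pair_pmf (bernoulli_pmf (1/2)) (pair_pmf (bernoulli_pmf (1/2)) (bernoulli_pmf (1/2)))) (bernoulli_pmf (9/10))) (x, y = tt x)"
    by (simp add: data_alt pmf_map_inj' inj_gg)
  thus ?thesis by (cases x) (auto simp: pmf_pair)
qed
lemma prob_data: "measure_pmf.prob data A = (\<Sum>w\<in>UNIV. if w \<in> A then pmf data w else 0)"
  by (simp add: measure_measure_pmf_finite sum.If_cases)
lemma sumP: "(\<Sum>w\<in>(UNIV::('a\<times>'b) set). f w) = (\<Sum>a\<in>UNIV. \<Sum>b\<in>UNIV. f (a,b))"
  by (simp add: sum.cartesian_product)
lemmas comp = UNIV_bool pmf_data tt_def removed_def selected_def vlist_def mask_compl_def e_encode_def val_expl_def cond_prob_def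

lemma roar: "roar_optimal data e_encode"
  unfolding roar_optimal_def indep_pmf_def
proof (intro allI)
  fix a :: "bvec \<times> bool list" and b :: bool
  show "measure_pmf.prob data {w. snd w = b \<and> (case w of (x, y) \<Rightarrow> removed e_encode x) = a} =
        measure_pmf.prob data {w. snd w = b} * measure_pmf.prob data {w. (case w of (x, y) \<Rightarrow> removed e_encode x) = a}"
  proof (cases "\<exists>x. removed e_encode x = a")
    case True
    then obtain x1 x2 x3 where a: "a = removed e_encode (x1,x2,x3)" by auto
    show ?thesis unfolding a
      apply (simp only: prob_data sumP UNIV_bool)
      by (cases x1; cases x2; cases x3; cases b) (simp_all add: comp)
  next
    case False
    then have e1: "{w. snd w = b \<and> (case w of (x, y) \<Rightarrow> removed e_encode x) = a} = {}"
       and e2: "{w. (case w of (x, y) \<Rightarrow> removed e_encode x) = a} = {}" by (auto split: prod.splits)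
    show ?thesis unfolding e1 e2 by simp
  qed
qed

lemma fresh: "fresh_optimal data e_encode"
  unfolding fresh_optimal_def
proof (rule AE_I2, intro allI)
  fix w :: "bvec \<times> bool" and b
  obtain x1 x2 x3 y where w: "w = ((x1,x2,x3),y)" by (metis prod.exhaust)
  show "cond_prob data snd b (\<lambda>(x, y). val_expl e_encode x) (val_expl e_encode (fst w)) =
         cond_prob data snd b fst (fst w)"
    unfolding w
    apply (simp only: cond_prob_def prob_data sumP UNIV_bool fst_conv)
    by (cases x1; cases x2; cases x3; cases b) (simp_all add: comp)
qed
theorem proposition1:
  shows "roar_optimal data e_encode \<and> fresh_optimal data e_encode"
  using roar fresh by blast

end
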